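(* Let $n\ge4$ be even, $p\ge n+1$ an integer, $c_1$ a positive integer, $a_k=pc_k$, $c_{k+1}=p^2c_k$, and let $T$, $I^{(j)}$, $I^{(j)}_i$ and $\lambda_1$ be as in the context. Then for every $j\ge1$: (1) $\dfrac{\lambda_1(I^{(j)}_1\cup I^{(j)}_n)}{\lambda_1(I^{(j)})}>\dfrac12$; (2) $\dfrac{\lambda_1\bigl(\bigcup_{i=2}^{n-1}I^{(j)}_i\bigr)}{\lambda_1(I^{(j)})}<\dfrac{n}{c_j}$.
   Context: $\pi$ is the permutation of $\{1,\dots,n\}$ with top row $1,2,\dots,n$ and bottom row $n,3,2,5,4,\dots,n-1,n-2,1$. Right Rauzy induction: step "0" when the rightmost domain (top) interval is longer, "1" when the rightmost image (bottom) interval is longer. For $a,c>0$, $\dot\gamma_{m,a}=1^{n-1-m}0^a10^2$, $\gamma_{a,c}=0\,\dot\gamma_{n-2,a}\cdots\dot\gamma_{2,a}\,1^{c(n-1)}$; its transition matrix $\Theta_{a,c}$ (old lengths $=\Theta_{a,c}\cdot$new lengths) has row $1=(1,c,\dots,c)$, row $n=(1,c+1,\dots,c+1)$, and for $1\le i\le(n-2)/2$: row $2i$ has $0$ in column 1, $2$ in columns $2i,2i+1$, $1$ in the other columns among $2,\dots,n$; row $2i+1$ has $a$ in column $2i$, $a+1$ in column $2i+1$, $0$ elsewhere. $\Theta_k=\Theta_{a_k,c_k}$. $T$ is an IET of $[0,1)$ with permutation $\pi$ whose right Rauzy induction path is $\gamma_{a_1,c_1}\gamma_{a_2,c_2}\cdots$;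 $I^{(j)}$ is the interval on which the induced map lives after the first $j$ blocks and $I^{(j)}_1,\dots,I^{(j)}_n$ its exchanged subintervals; lengths satisfy $\ell^{(j-1)}=\Theta_j\ell^{(j)}$. For $v\ge0$, $|v|$ is the sum of entries and $\overline v=v/|v|$. $\lambda_1$ denotes the $T$-invariant Borel probability measure such that for every $j\ge0$, $(\lambda_1(I^{(j)}_i))_i$ is a positive multiple of $\lim_{m\to\infty}\overline{\Theta_{j+1}\cdots\Theta_me_1}$. *)

theory Defs
  imports "HOL-Probability.Probability"
begin

text \<open>Square matrices of size n are represented as functions nat => nat => real,
  with indices ranging over 1..n (row, column).  Vectors are nat => real on 1..n.\<close>

definition Theta :: "nat \<Rightarrow> nat \<Rightarrow> nat \<Rightarrow> nat \<Rightarrow> nat \<Rightarrow> real" where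
  "Theta n a c r k =
     (if r = 1 then (if k = 1 then 1 else real c)
      else if r = n then (if k = 1 then 1 else real c + 1)
      else if even r then
        (if k = 1 then 0 else if k = r \<or> k = r + 1 then 2 else 1)
      else
        (if k = r - 1 then real a else if k = r then real a + 1 else 0))"

definition matmul :: "nat \<Rightarrow> (nat \<Rightarrow> nat \<Rightarrow> real) \<Rightarrow> (nat \<Rightarrow> nat \<Rightarrow> real) \<Rightarrow> nat \<Rightarrow> nat \<Rightarrow> real" where
  "matmul n A B r k = (\<Sum>l = 1..n. A r l * B l k)"

definition idmat :: "nat \<Rightarrow> nat \<Rightarrow> real" where
  "idmat r k = (if r = k then 1 else 0)"

fun thetaProd :: "nat \<Rightarrow> (nat \<Rightarrow> nat) \<Rightarrow> (nat \<Rightarrow> nat) \<Rightarrow> nat \<Rightarrow> nat \<Rightarrow> nat \<Rightarrow> nat \<Rightarrow> real" where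
  "thetaProd n a c j 0 = idmat"
| "thetaProd n a c j (Suc m) =
     (if Suc m \<le> j then idmat
      else matmul n (thetaProd n a c j m) (Theta n (a (Suc m)) (c (Suc m))))"

definition normProdE1 :: "nat \<Rightarrow> (nat \<Rightarrow> nat) \<Rightarrow> (nat \<Rightarrow> nat) \<Rightarrow> nat \<Rightarrow> nat \<Rightarrow> nat \<Rightarrow> real" where
  "normProdE1 n a c j m i =
     thetaProd n a c j m i 1 / (\<Sum>k = 1..n. thetaProd n a c j m k 1)"

end

theory Submission imports Defs begin

lemma tp_id: "m \<le> j \<Longrightarrow> thetaProd n a c j m = idmat"
  by (cases m) auto

lemma idmat_l: "finite S \<Longrightarrow> r \<in> S \<Longrightarrow> (\<Sum>l\<in>S. idmat r l * f l) = (f r::real)"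
proof -
  assume "finite S" "r \<in> S"
  have "(\<Sum>l\<in>S. idmat r l * f l) = (\<Sum>l\<in>S. if r = l then f l else 0)"
    by (intro sum.cong) (auto simp: idmat_def)
  then show ?thesis using \<open>finite S\<close> \<open>r \<in> S\<close> by simp
qed

lemma idmat_r: "finite S \<Longrightarrow> r \<in> S \<Longrightarrow> (\<Sum>l\<in>S. f l * idmat l r) = (f r::real)"
proof -
  assume "finite S" "r \<in> S"
  have "(\<Sum>l\<in>S. f l * idmat l r) = (\<Sum>l\<in>S. if l = r then f l else 0)"
    by (intro sum.cong) (auto simp: idmat_def)
  then show ?thesis using \<open>finite S\<close> \<open>r \<in> S\<close> by simp
qed

lemma tp_left:
  assumes "j < m" "r \<in> {1..n}" "k \<in> {1..n}"
  shows "thetaProd n a c j m r k =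
    (\<Sum>l=1..n. Theta n (a (Suc j)) (c (Suc j)) r l * thetaProd n a c (Suc j) m l k)"
  using assms(1) assms(3)
proof (induction m arbitrary: k)
  case 0 then show ?case by simp
next
  case (Suc m)
  show ?case
  proof (cases "m = j")
    case True
    have "thetaProd n a c j (Suc m) r k = (\<Sum>l=1..n. idmat r l * Theta n (a (Suc j)) (c (Suc j)) l k)"
      using True by (simp add: matmul_def tp_id)
    also have "\<dots> = Theta n (a (Suc j)) (c (Suc j)) r k"
      using assms(2) by (simp add: idmat_l)
    also have "\<dots> = (\<Sum>l=1..n. Theta n (a (Suc j)) (c (Suc j)) r l * idmat l k)"
      using Suc.prems(2) by (simp add: idmat_r)
    finally show ?thesis using True by (simp add: tp_id)
  next
    case False
    hence jm: "j < m" using Suc.prems by simp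
    let ?T = "Theta n (a (Suc j)) (c (Suc j))"
    let ?T' = "Theta n (a (Suc m)) (c (Suc m))"
    have "thetaProd n a c j (Suc m) r k = (\<Sum>l=1..n. thetaProd n a c j m r l * ?T' l k)"
      using jm by (simp add: matmul_def)
    also have "\<dots> = (\<Sum>l=1..n. (\<Sum>q=1..n. ?T r q * thetaProd n a c (Suc j) m q l) * ?T' l k)"
      by (intro sum.cong refl) (use Suc.IH[OF jm] in simp)
    also have "\<dots> = (\<Sum>q=1..n. ?T r q * (\<Sum>l=1..n. thetaProd n a c (Suc j) m q l * ?T' l k))"
      by (simp add: sum_distrib_left sum_distrib_right mult.assoc) (rule sum.swap)
    also have "\<dots> = (\<Sum>q=1..n. ?T r q * thetaProd n a c (Suc j) (Suc m) q k)"
      using jm by (simp add: matmul_def)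
    finally show ?thesis .
  qed
qed

lemma pair_sum: "(\<Sum>r=2..2*h+1. f r) = (\<Sum>i=1..h. f (2*i) + f (2*i+1::nat)) "
proof (induction h)
  case 0 then show ?case by simp
next
  case (Suc h)
  have "(\<Sum>r=2..2*Suc h+1. f r) = (\<Sum>r=2..2*h+1. f r) + f (2*h+2) + f (2*h+3)"
    by (simp add: sum.cl_ivl_Suc numeral_eq_Suc)
  then show ?case using Suc by (simp add: algebra_simps)
qed

lemma split1: "1 \<le> (n::nat) \<Longrightarrow> (\<Sum>l=1..n. f l) = f 1 + (\<Sum>l=2..n. f l)"
  by (simp add: sum.atLeast_Suc_atMost numeral_2_eq_2)

lemma Theta_nonneg: "0 \<le> Theta n a c r k"
  by (simp add: Theta_def)

lemma row1:
  assumes "n \<ge> 4"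
  shows "(\<Sum>l=1..n. Theta n a c 1 l * x l) = x 1 + real c * (\<Sum>l=2..n. x l)"
proof -
  have "(\<Sum>l=1..n. Theta n a c 1 l * x l) = Theta n a c 1 1 * x 1 + (\<Sum>l=2..n. Theta n a c 1 l * x l)"
    using assms by (intro split1) simp
  also have "(\<Sum>l=2..n. Theta n a c 1 l * x l) = (\<Sum>l=2..n. real c * x l)"
    by (intro sum.cong refl) (auto simp: Theta_def)
  finally show ?thesis by (simp add: Theta_def sum_distrib_left)
qed

lemma rown:
  assumes "n \<ge> 4"
  shows "(\<Sum>l=1..n. Theta n a c n l * x l) = x 1 + (real c + 1) * (\<Sum>l=2..n. x l)"
proof -
  have "(\<Sum>l=1..n. Theta n a c n l * x l) = Theta n a c n 1 * x 1 + (\<Sum>l=2..n. Theta n a c n l * x l)"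
    using assms by (intro split1) simp
  also have "(\<Sum>l=2..n. Theta n a c n l * x l) = (\<Sum>l=2..n. (real c + 1) * x l)"
    using assms by (intro sum.cong refl) (auto simp: Theta_def)
  finally show ?thesis using assms by (simp add: Theta_def sum_distrib_left)
qed

lemma row_even:
  assumes "n = 2*h+2" "1 \<le> i" "i \<le> h"
  shows "(\<Sum>l=1..n. Theta n a c (2*i) l * x l) = (\<Sum>l=2..n. x l) + x (2*i) + x (2*i+1)"
proof -
  have "(\<Sum>l=1..n. Theta n a c (2*i) l * x l) = Theta n a c (2*i) 1 * x 1 + (\<Sum>l=2..n. Theta n a c (2*i) l * x l)"
    using assms by (intro split1) simp
  also have "Theta n a c (2*i) 1 = 0" using assms by (simp add: Theta_def)
  also have "(\<Sum>l=2..n. Theta n a c (2*i) l * x l) = (\<Sum>l=2..n. x l + (if l = 2*i then x l else 0) + (if l = 2*i+1 then x l else 0))"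
    using assms by (intro sum.cong refl) (auto simp: Theta_def)
  also have "\<dots> = (\<Sum>l=2..n. x l) + x (2*i) + x (2*i+1)"
    using assms by (simp add: sum.distrib)
  finally show ?thesis by simp
qed

lemma row_odd:
  assumes "n = 2*h+2" "1 \<le> i" "i \<le> h"
  shows "(\<Sum>l=1..n. Theta n a c (2*i+1) l * x l) = real a * x (2*i) + (real a + 1) * x (2*i+1)"
proof -
  have "(\<Sum>l=1..n. Theta n a c (2*i+1) l * x l) = (\<Sum>l=1..n. (if l = 2*i then real a * x l else 0) + (if l = 2*i+1 then (real a + 1) * x l else 0))"
    using assms by (intro sum.cong refl) (auto simp: Theta_def)
  also have "\<dots> = real a * x (2*i) + (real a + 1) * x (2*i+1)"
    using assms by (simp add: sum.distrib)
  finally show ?thesis .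
qed

lemma arith_step:
  fixes C P M xn x1 h mid :: real
  assumes "C \<ge> 0" "P \<ge> 2" "M \<ge> 0" "xn \<ge> 0" "x1 \<ge> 0" "h \<ge> 0"
    and IH: "P^2 * C * M \<le> 2*h*xn" and mid: "mid \<le> h*(M+xn) + (P*C+2)*M"
  shows "C * mid \<le> 2*h*(x1 + (C+1)*(M+xn))"
proof -
  define S where "S = M + xn"
  have S0: "S \<ge> 0" "xn \<le> S" using assms by (auto simp: S_def)
  have 1: "C * mid \<le> C*h*S + (P*C+2)*(C*M)"
    using mult_left_mono[OF mid assms(1)] by (simp add: S_def algebra_simps)
  have 2: "P^2 * ((P*C+2)*(C*M)) \<le> (P*C+2) * (2*h*S)"
  proof -
    have "P^2 * ((P*C+2)*(C*M)) = (P*C+2) * (P^2*C*M)" by (simp add: algebra_simps)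
    also have "\<dots> \<le> (P*C+2) * (2*h*xn)"
      using IH assms by (intro mult_left_mono) auto
    also have "\<dots> \<le> (P*C+2) * (2*h*S)"
      using S0 assms by (intro mult_left_mono) auto
    finally show ?thesis .
  qed
  have 3: "(P*C+2) \<le> (C+1)*P^2/2"
  proof -
    have "P*C*1 \<le> P*C*(P/2)" using assms by (intro mult_left_mono) auto
    hence "P*C \<le> C*P^2/2" by (simp add: power2_eq_square algebra_simps)
    moreover have "2 \<le> P^2/2" using mult_mono[OF assms(2) assms(2)] assms(2) by (simp add: power2_eq_square)
    ultimately show ?thesis by (simp add: algebra_simps)
  qed
  have "(P*C+2) * (2*h*S) \<le> (C+1)*P^2/2 * (2*h*S)"
    using 3 S0 assms by (intro mult_right_mono) auto
  with 2 have "P^2 * ((P*C+2)*(C*M)) \<le> P^2 * ((C+1)*h*S)" by (simp add: algebra_simps)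
  hence 4: "(P*C+2)*(C*M) \<le> (C+1)*h*S" using assms by (simp add: mult_le_cancel_left)
  have "C * mid \<le> C*h*S + (C+1)*h*S" using 1 4 by linarith
  also have "\<dots> \<le> 2*h*(x1 + (C+1)*S)" using assms S0
    by (simp add: algebra_simps)
  finally show ?thesis by (simp add: S_def)
qed

lemma fracle: "0 < (b::real) \<Longrightarrow> 0 < d \<Longrightarrow> a*d \<le> c*b \<Longrightarrow> a/b \<le> c/d"
  by (simp add: field_simps)
lemma frac_half: "0 < (d::real) \<Longrightarrow> 2*a < d \<Longrightarrow> a/d < 1/2"
  by (simp add: field_simps)
lemma frac_lt: "0 < (q::real) \<Longrightarrow> 0 < d \<Longrightarrow> a < n*q \<Longrightarrow> a/(q*d) < n/d"
  by (simp add: field_simps)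

lemma splitlast: "3 \<le> (n::nat) \<Longrightarrow> (\<Sum>l=2..n. f l) = (\<Sum>l=2..n-1. f l) + (f n::real)"
proof -
  assume "3 \<le> n"
  then obtain k where k: "n = Suc k" "2 \<le> k" by (cases n) auto
  then show ?thesis by (simp add: sum.cl_ivl_Suc)
qed

lemma mid_bound:
  assumes n: "n = 2*h+2" and h: "1 \<le> h" and x: "\<forall>l\<in>{1..n}. 0 \<le> x l"
  shows "(\<Sum>r=2..n-1. \<Sum>l=1..n. Theta n a c r l * x l)
         \<le> real h * (\<Sum>l=2..n. x l) + (real a + 2) * (\<Sum>l=2..n-1. x l)"
proof -
  let ?S = "\<Sum>l=2..n. x l"
  let ?y = "\<lambda>r. \<Sum>l=1..n. Theta n a c r l * x l"
  have n1: "n - 1 = 2*h+1" using n by simp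
  have "(\<Sum>r=2..n-1. ?y r) = (\<Sum>i=1..h. ?y (2*i) + ?y (2*i+1))"
    unfolding n1 by (rule pair_sum)
  also have "\<dots> = (\<Sum>i=1..h. ?S + x (2*i) + x (2*i+1) + (real a * x (2*i) + (real a + 1) * x (2*i+1)))"
  proof (intro sum.cong refl)
    fix i assume i: "i \<in> {1..h}"
    show "?y (2*i) + ?y (2*i+1) = ?S + x (2*i) + x (2*i+1) + (real a * x (2*i) + (real a + 1) * x (2*i+1))"
      using row_even[OF n, of i a c x] row_odd[OF n, of i a c x] i by simp
  qed
  also have "\<dots> \<le> (\<Sum>i=1..h. ?S + (real a + 2) * (x (2*i) + x (2*i+1)))"
  proof (intro sum_mono)
    fix i assume i: "i \<in> {1..h}"
    have "0 \<le> x (2*i+1)" "0 \<le> x (2*i)" using x i n by auto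
    then show "?S + x (2*i) + x (2*i+1) + (real a * x (2*i) + (real a + 1) * x (2*i+1))
         \<le> ?S + (real a + 2) * (x (2*i) + x (2*i+1))" by (simp add: algebra_simps)
  qed
  also have "\<dots> = real h * ?S + (real a + 2) * (\<Sum>i=1..h. x (2*i) + x (2*i+1))"
    by (subst sum.distrib) (simp add: sum_distrib_left)
  also have "(\<Sum>i=1..h. x (2*i) + x (2*i+1)) = (\<Sum>l=2..n-1. x l)"
    unfolding n1 by (rule pair_sum[symmetric])
  finally show ?thesis .
qed

lemma inv_lemma:
  fixes n p h :: nat and a c :: "nat \<Rightarrow> nat"
  assumes n: "n = 2*h+2" and h: "1 \<le> h" and p: "p \<ge> 2"
    and ca: "\<And>k. k \<ge> 1 \<Longrightarrow> a k = p * c k"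
    and cc: "\<And>k. k \<ge> 1 \<Longrightarrow> c (k + 1) = p ^ 2 * c k"
    and jm: "j \<le> m"
  shows "(\<forall>i\<in>{1..n}. 0 \<le> thetaProd n a c j m i 1) \<and>
         0 < thetaProd n a c j m 1 1 + thetaProd n a c j m n 1 \<and>
         real (c (Suc j)) * (\<Sum>i=2..n-1. thetaProd n a c j m i 1) \<le> real (n-2) * thetaProd n a c j m n 1"
  using jm
proof (induction j rule: inc_induct)
  case base
  have "(\<Sum>i=2..n-1. thetaProd n a c m m i 1) = 0"
    by (intro sum.neutral) (auto simp: tp_id idmat_def)
  then show ?case using n by (auto simp: tp_id idmat_def)
next
  case (step j)
  define x where "x l = thetaProd n a c (Suc j) m l 1" for l
  define C where "C = real (c (Suc j))"
  have yx: "thetaProd n a c j m r 1 = (\<Sum>l=1..n. Theta n (a (Suc j)) (c (Suc j)) r l * x l)"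
    if "r \<in> {1..n}" for r
    unfolding x_def using tp_left[OF step(2) that] n by simp
  have xnn: "\<forall>l\<in>{1..n}. 0 \<le> x l" and x1n: "0 < x 1 + x n"
    and IH: "real (c (Suc (Suc j))) * (\<Sum>i=2..n-1. x i) \<le> real (n-2) * x n"
    using step(3) unfolding x_def by auto
  have n4: "n \<ge> 4" using n h by simp
  let ?S = "\<Sum>l=2..n. x l"
  let ?M = "\<Sum>l=2..n-1. x l"
  have SM: "?S = ?M + x n" using n4 by (intro splitlast) simp
  have M0: "?M \<ge> 0" using xnn n by (intro sum_nonneg) auto
  have xn0: "x n \<ge> 0" "x 1 \<ge> 0" using xnn n by auto
  have nonneg: "\<forall>i\<in>{1..n}. 0 \<le> thetaProd n a c j m i 1"
  proof
    fix i assume i: "i \<in> {1..n}"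
    have "0 \<le> (\<Sum>l=1..n. Theta n (a (Suc j)) (c (Suc j)) i l * x l)"
      using xnn by (intro sum_nonneg mult_nonneg_nonneg Theta_nonneg) auto
    then show "0 \<le> thetaProd n a c j m i 1" using yx[OF i] by simp
  qed
  have y1: "thetaProd n a c j m 1 1 = x 1 + C * ?S"
    using yx[of 1] n4 row1[OF n4] by (simp add: C_def)
  have yn: "thetaProd n a c j m n 1 = x 1 + (C + 1) * ?S"
    using yx[of n] n4 rown[OF n4] by (simp add: C_def)
  have C0: "C \<ge> 0" by (simp add: C_def)
  have pos: "0 < thetaProd n a c j m 1 1 + thetaProd n a c j m n 1"
  proof -
    have "0 \<le> C * ?S" using C0 M0 xn0 SM by simp
    moreover have "x 1 + x n \<le> x 1 + (C+1) * ?S"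
    proof -
      have "(C+1)*?S = C*?S + ?S" by (simp add: algebra_simps)
      moreover have "0 \<le> C * ?S" using C0 M0 xn0 SM by simp
      ultimately show ?thesis using SM M0 by linarith
    qed
    ultimately show ?thesis using y1 yn x1n xn0 by linarith
  qed
  have A: "real (a (Suc j)) = real p * C" using ca[of "Suc j"] by (simp add: C_def)
  have cS: "real (c (Suc (Suc j))) = real p ^ 2 * C"
    using cc[of "Suc j"] by (simp add: C_def)
  have midy: "(\<Sum>i=2..n-1. thetaProd n a c j m i 1) \<le> real h * (?M + x n) + (real p * C + 2) * ?M"
  proof -
    have "(\<Sum>i=2..n-1. thetaProd n a c j m i 1) = (\<Sum>r=2..n-1. \<Sum>l=1..n. Theta n (a (Suc j)) (c (Suc j)) r l * x l)"
      using n4 by (intro sum.cong refl yx) auto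
    also have "\<dots> \<le> real h * ?S + (real (a (Suc j)) + 2) * ?M"
      by (rule mid_bound[OF n h xnn])
    finally show ?thesis using SM A by simp
  qed
  have hh: "real (n-2) = 2 * real h" using n by simp
  have "C * (\<Sum>i=2..n-1. thetaProd n a c j m i 1) \<le> 2 * real h * (x 1 + (C+1) * (?M + x n))"
    apply (rule arith_step[OF C0 _ M0 xn0(1) xn0(2) _ _ midy])
    using p IH cS hh by (auto simp: algebra_simps)
  then have "C * (\<Sum>i=2..n-1. thetaProd n a c j m i 1) \<le> real (n-2) * thetaProd n a c j m n 1"
    using yn SM hh by simp
  then show ?case using nonneg pos by (simp add: C_def)
qed
theorem mainTheorem5:
  fixes n p :: nat and a c :: "nat \<Rightarrow> nat"
    and lam1 :: "real measure"
    and I :: "nat \<Rightarrow> real set" and Isub :: "nat \<Rightarrow> nat \<Rightarrow> real set"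
    and L :: "nat \<Rightarrow> nat \<Rightarrow> real"
  assumes n4: "n \<ge> 4" and neven: "even n"
    and p: "p \<ge> n + 1"
    and c1: "c 1 > 0"
    and ca: "\<And>k. k \<ge> 1 \<Longrightarrow> a k = p * c k"
    and cc: "\<And>k. k \<ge> 1 \<Longrightarrow> c (k + 1) = p ^ 2 * c k"
    and prob: "prob_space lam1"
    and borel: "sets lam1 = sets borel"
    and Isub_meas: "\<And>j i. i \<in> {1..n} \<Longrightarrow> Isub j i \<in> sets lam1"
    and Isub_disj: "\<And>j. disjoint_family_on (Isub j) {1..n}"
    and I_union: "\<And>j. I j = (\<Union>i\<in>{1..n}. Isub j i)"
    and L_lim: "\<And>j i. i \<in> {1..n} \<Longrightarrow> (\<lambda>m. normProdE1 n a c j m i) \<longlonglongrightarrow> L j i"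
    and lam1_L: "\<And>j. \<exists>t>0. \<forall>i\<in>{1..n}. measure lam1 (Isub j i) = t * L j i"
  shows "\<forall>j\<ge>1.
           measure lam1 (Isub j 1 \<union> Isub j n) / measure lam1 (I j) > 1 / 2 \<and>
           measure lam1 (\<Union>i\<in>{2..n-1}. Isub j i) / measure lam1 (I j) < real n / real (c j)"
proof (intro allI impI)
  fix j :: nat assume j1: "1 \<le> j"
  obtain h where n: "n = 2*h+2" and h: "1 \<le> h"
  proof -
    obtain k where "n = 2*k" using neven by (auto elim: evenE)
    then show ?thesis using that[of "k - 1"] n4 by simp
  qed
  have p2: "p \<ge> 2" using p n4 by simp
  have cpos: "c k > 0" if "k \<ge> 1" for k
    using that
  proof (induction k rule: dec_induct)
    case base then show ?case using c1 .
  next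
    case (step k) then show ?case using cc[of k] p2 by simp
  qed
  have cj: "c j > 0" using cpos j1 .
  have cSj: "c (Suc j) = p^2 * c j" using cc[OF j1] by simp
  define C where "C = real (c (Suc j))"
  have Cpos: "C > 0" using cpos[of "Suc j"] by (simp add: C_def)
  define B where "B = real (n-2) / C"
  define V where "V m i = thetaProd n a c j m i 1" for m i
  define tot where "tot m = (\<Sum>k=1..n. V m k)" for m
  have split3: "(\<Sum>i=1..n. f i) = f 1 + (\<Sum>i=2..n-1. f i) + (f n :: real)" for f
    using split1[of n f] splitlast[of n f] n4 by simp
  have ev: "(\<Sum>i=1..n. normProdE1 n a c j m i) = 1 \<and> (\<Sum>i=2..n-1. normProdE1 n a c j m i) \<le> B"
    if jm: "j \<le> m" for m
  proof -
    note iv0 = inv_lemma[of n h p a c j m, OF n h p2 ca cc jm]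
    note iv = iv0[folded V_def]
    have nn: "\<forall>i\<in>{1..n}. 0 \<le> V m i" and pos: "0 < V m 1 + V m n"
      and md: "C * (\<Sum>i=2..n-1. V m i) \<le> real (n-2) * V m n" using iv by (auto simp: C_def)
    have Mnn: "0 \<le> (\<Sum>i=2..n-1. V m i)" using nn by (intro sum_nonneg) auto
    have tot3: "tot m = V m 1 + (\<Sum>i=2..n-1. V m i) + V m n" unfolding tot_def by (rule split3)
    have totpos: "tot m > 0" using tot3 Mnn pos by linarith
    have normdef: "normProdE1 n a c j m i = V m i / tot m" for i
      by (simp add: normProdE1_def V_def tot_def)
    have s1: "(\<Sum>i=1..n. normProdE1 n a c j m i) = 1"
      using totpos by (simp add: normdef sum_divide_distrib[symmetric] tot_def)
    have "(\<Sum>i=2..n-1. normProdE1 n a c j m i) = (\<Sum>i=2..n-1. V m i) / tot m"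
      by (simp add: normdef sum_divide_distrib)
    also have "\<dots> \<le> B"
    proof -
      have V1: "0 \<le> V m 1" using nn n4 by auto
      have "real (n-2) * V m n \<le> real (n-2) * tot m"
        using tot3 V1 Mnn by (intro mult_left_mono) auto
      hence "C * (\<Sum>i=2..n-1. V m i) \<le> real (n-2) * tot m" using md by linarith
      then show ?thesis using totpos Cpos unfolding B_def
        by (intro fracle) (auto simp: mult.commute)
    qed
    finally show ?thesis using s1 by simp
  qed
  have lim1: "(\<lambda>m. \<Sum>i=1..n. normProdE1 n a c j m i) \<longlonglongrightarrow> (\<Sum>i=1..n. L j i)"
    by (intro tendsto_sum L_lim) simp
  have lim2: "(\<lambda>m. \<Sum>i=2..n-1. normProdE1 n a c j m i) \<longlonglongrightarrow> (\<Sum>i=2..n-1. L j i)"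
    by (intro tendsto_sum L_lim) auto
  have sumL: "(\<Sum>i=1..n. L j i) = 1"
  proof (rule antisym)
    show "(\<Sum>i=1..n. L j i) \<le> 1" using ev by (intro LIMSEQ_le_const2[OF lim1] exI[of _ j]) auto
    show "1 \<le> (\<Sum>i=1..n. L j i)" using ev by (intro LIMSEQ_le_const[OF lim1] exI[of _ j]) auto
  qed
  have midL: "(\<Sum>i=2..n-1. L j i) \<le> B" using ev by (intro LIMSEQ_le_const2[OF lim2] exI[of _ j]) auto
  have outer: "L j 1 + L j n = 1 - (\<Sum>i=2..n-1. L j i)" using sumL split3[of "L j"] by simp
  obtain t where t: "t > 0" "\<forall>i\<in>{1..n}. measure lam1 (Isub j i) = t * L j i" using lam1_L by blast
  interpret prob_space lam1 by (rule prob)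
  have mI: "measure lam1 (I j) = t"
  proof -
    have "measure lam1 (I j) = (\<Sum>i\<in>{1..n}. measure lam1 (Isub j i))"
      unfolding I_union using Isub_meas Isub_disj by (intro finite_measure_finite_Union) auto
    also have "\<dots> = (\<Sum>i=1..n. t * L j i)" using t by simp
    finally show ?thesis using sumL by (simp add: sum_distrib_left[symmetric])
  qed
  have m1n: "measure lam1 (Isub j 1 \<union> Isub j n) = t * (L j 1 + L j n)"
  proof -
    have "Isub j 1 \<union> Isub j n = (\<Union>i\<in>{1,n}. Isub j i)" by auto
    also have "measure lam1 \<dots> = (\<Sum>i\<in>{1,n}. measure lam1 (Isub j i))"
      using Isub_meas n4 disjoint_family_on_mono[OF _ Isub_disj[of j], of "{1,n}"]
      by (intro finite_measure_finite_Union) auto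
    also have "\<dots> = t * (L j 1 + L j n)" using t n4 by (simp add: algebra_simps)
    finally show ?thesis .
  qed
  have mmid: "measure lam1 (\<Union>i\<in>{2..n-1}. Isub j i) = t * (\<Sum>i=2..n-1. L j i)"
  proof -
    have "measure lam1 (\<Union>i\<in>{2..n-1}. Isub j i) = (\<Sum>i\<in>{2..n-1}. measure lam1 (Isub j i))"
      using Isub_meas n4 disjoint_family_on_mono[OF _ Isub_disj[of j], of "{2..n-1}"]
      by (intro finite_measure_finite_Union) auto
    also have "\<dots> = (\<Sum>i=2..n-1. t * L j i)" using t by (intro sum.cong) auto
    finally show ?thesis by (simp add: sum_distrib_left)
  qed
  have Bval: "B = real (n-2) / (real p ^ 2 * real (c j))"
    unfolding B_def C_def cSj by simp
  have pn: "real p ^ 2 \<ge> (real n + 1)^2" using p by (intro power_mono) auto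
  have cj1: "real (c j) \<ge> 1" using cj by simp
  have B_half: "B < 1/2"
  proof -
    have "2 * real (n-2) < (real n + 1)^2" using n4 by (simp add: power2_eq_square of_nat_diff algebra_simps add_pos_nonneg)
    also have "\<dots> \<le> real p ^ 2 * 1" using pn by simp
    also have "\<dots> \<le> real p ^ 2 * real (c j)" using cj1 by (intro mult_left_mono) auto
    finally have "2 * real (n-2) < real p ^ 2 * real (c j)" .
    moreover have "real p ^ 2 * real (c j) > 0" using cj p2 by simp
    ultimately show ?thesis unfolding Bval by (intro frac_half) auto
  qed
  have B_n: "B < real n / real (c j)"
  proof -
    have "real (n-2) < real n * 1" using n4 by simp
    also have "\<dots> \<le> real n * real p ^ 2" using p2 by (intro mult_left_mono) (auto simp: one_le_power)
    finally have "real (n-2) < real n * real p ^ 2" .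
    moreover have "real p ^ 2 > 0" "real (c j) > 0" using cj p2 by auto
    ultimately show ?thesis unfolding Bval by (intro frac_lt) auto
  qed
  show "measure lam1 (Isub j 1 \<union> Isub j n) / measure lam1 (I j) > 1 / 2 \<and>
        measure lam1 (\<Union>i\<in>{2..n-1}. Isub j i) / measure lam1 (I j) < real n / real (c j)"
    using t(1) mI m1n mmid outer midL B_half B_n by simp
qed

end
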